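(* Let $T=(V,E)$ be an infinite spherically symmetric rooted tree with root $v_0$ and branching degrees $(d_r)_{r\ge0}$, $d_r\ge2$, $\sup_rd_r<\infty$, and let $S_n$, $\mathcal U_{n,r}$, $\mathcal V_n$ be as in the context. Then: (1) $\dim\ell^2(S_n)=|S_n|=\prod_{q=0}^{n-1}d_q$ for all $n\ge0$; (2) $\dim\mathcal U_{n,r}=\big(\prod_{q=0}^{n-2}d_q\big)(d_{n-1}-1)$ for all $n\ge2$, $r\ge n$; $\dim\mathcal U_{1,r}=d_0-1$ for all $r\ge1$; and $\dim\mathcal U_{0,r}=1$ for all $r\ge0$; (3) $\dim\mathcal V_n=\infty$ for all $n\ge0$.
   Context: A rooted tree with root $v_0$ is spherically symmetric with branching degrees $(d_r)$ if every vertex at distance $r$ from $v_0$ has exactly $d_r$ neighbours at distance $r+1$. $|v|$ is the distance to $v_0$, $S_r=\{v:|v|=r\}$, $\ell^2(S_r)\subset\ell^2(V)$ the functions vanishing off $S_r$; for $v\ne v_0$, $v_-$ is the neighbour of $v$ closer to $v_0$. $H$ is the operator on $\ell^2(V)$ with $(H\xi)(v)=\xi(v_-)$ for $v\ne v_0$ and $(H\xi)(v_0)=0$. Define $\mathcal U_{0,0}=\ell^2(S_0)$ and $\mathcal U_{0,r}=H^r(\mathcal U_{0,0})$; inductively for $n\ge1$, $\mathcal U_{n,n}$ is the orthogonal complement of $\mathcal U_{0,n}\oplus\cdots\oplus\mathcal U_{n-1,n}$ in $\ell^2(S_n)$, $\mathcal U_{n,r}=H^{r-n}(\mathcal U_{n,n})$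 for $r\ge n$; and $\mathcal V_n=\bigoplus_{r\ge n}\mathcal U_{n,r}$. *)

theory Defs
  imports "HOL-Analysis.Analysis" "HOL-Library.Function_Algebras"
begin

text \<open>A rooted tree with vertex set V and root v0 is given by the parent map
  p (p v is v_- for v \<noteq> v0).\<close>

definition depth :: "'v \<Rightarrow> ('v \<Rightarrow> 'v) \<Rightarrow> 'v \<Rightarrow> nat" where
  "depth v0 p v = (LEAST n. (p ^^ n) v = v0)"

definition children :: "'v set \<Rightarrow> 'v \<Rightarrow> ('v \<Rightarrow> 'v) \<Rightarrow> 'v \<Rightarrow> 'v set" where
  "children V v0 p v = {w \<in> V. w \<noteq> v0 \<and> p w = v}"

definition sph_sym_tree :: "'v set \<Rightarrow> 'v \<Rightarrow> ('v \<Rightarrow> 'v) \<Rightarrow> (nat \<Rightarrow> nat) \<Rightarrow> bool" where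
  "sph_sym_tree V v0 p d \<longleftrightarrow>
     v0 \<in> V \<and>
     (\<forall>v\<in>V. v \<noteq> v0 \<longrightarrow> p v \<in> V) \<and>
     (\<forall>v\<in>V. \<exists>n. (p ^^ n) v = v0) \<and>
     (\<forall>v\<in>V. finite (children V v0 p v) \<and> card (children V v0 p v) = d (depth v0 p v))"

definition sphere :: "'v set \<Rightarrow> 'v \<Rightarrow> ('v \<Rightarrow> 'v) \<Rightarrow> nat \<Rightarrow> 'v set" where
  "sphere V v0 p r = {v \<in> V. depth v0 p v = r}"

definition cscale :: "complex \<Rightarrow> ('v \<Rightarrow> complex) \<Rightarrow> ('v \<Rightarrow> complex)" where
  "cscale c f = (\<lambda>v. c * f v)"

definition cspan :: "('v \<Rightarrow> complex) set \<Rightarrow> ('v \<Rightarrow> complex) set" where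
  "cspan = module.span cscale"

definition cdim :: "('v \<Rightarrow> complex) set \<Rightarrow> nat" where
  "cdim = vector_space.dim cscale"

definition l2 :: "'v set \<Rightarrow> ('v \<Rightarrow> complex) set" where
  "l2 A = {f. (\<forall>v. v \<notin> A \<longrightarrow> f v = 0) \<and> (\<lambda>v. (cmod (f v))\<^sup>2) summable_on A}"

definition l2inner :: "('v \<Rightarrow> complex) \<Rightarrow> ('v \<Rightarrow> complex) \<Rightarrow> complex" where
  "l2inner f g = infsum (\<lambda>v. f v * cnj (g v)) UNIV"

definition Hop :: "'v set \<Rightarrow> 'v \<Rightarrow> ('v \<Rightarrow> 'v) \<Rightarrow> ('v \<Rightarrow> complex) \<Rightarrow> ('v \<Rightarrow> complex)" where
  "Hop V v0 p \<xi> = (\<lambda>v. if v \<in> V \<and> v \<noteq> v0 then \<xi> (p v) else 0)"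

text \<open>Udiag n = U_{n,n}: the orthogonal complement in l^2(S_n) of
  U_{0,n} + ... + U_{n-1,n}, where U_{k,n} = H^(n-k)(U_{k,k}).
  For n = 0 this is l^2(S_0).\<close>
function Udiag :: "'v set \<Rightarrow> 'v \<Rightarrow> ('v \<Rightarrow> 'v) \<Rightarrow> nat \<Rightarrow> ('v \<Rightarrow> complex) set" where
  "Udiag V v0 p n =
     {\<xi> \<in> l2 (sphere V v0 p n).
        \<forall>\<eta> \<in> cspan (\<Union>k\<in>{..<n}. (Hop V v0 p ^^ (n - k)) ` Udiag V v0 p k). l2inner \<xi> \<eta> = 0}"
  by pat_completeness auto
termination
  by (relation "Wellfounded.measure (\<lambda>(V, v0, p, n). n)") auto

text \<open>U_{n,r} = H^(r-n)(U_{n,n}) (meaningful for r \<ge> n).\<close>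
definition Usp :: "'v set \<Rightarrow> 'v \<Rightarrow> ('v \<Rightarrow> 'v) \<Rightarrow> nat \<Rightarrow> nat \<Rightarrow> ('v \<Rightarrow> complex) set" where
  "Usp V v0 p n r = (Hop V v0 p ^^ (r - n)) ` Udiag V v0 p n"

text \<open>V_n = Hilbert (orthogonal) direct sum of U_{n,r}, r \<ge> n, inside l^2(V).
  Since the U_{n,r} are supported on the pairwise disjoint spheres S_r, this is the
  set of l^2 functions vanishing on S_r for r < n whose restriction to S_r lies in
  U_{n,r} for every r \<ge> n.\<close>
definition Vsp :: "'v set \<Rightarrow> 'v \<Rightarrow> ('v \<Rightarrow> 'v) \<Rightarrow> nat \<Rightarrow> ('v \<Rightarrow> complex) set" where
  "Vsp V v0 p n = {\<xi> \<in> l2 V.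
      (\<forall>r<n. \<forall>v\<in>sphere V v0 p r. \<xi> v = 0) \<and>
      (\<forall>r\<ge>n. (\<lambda>v. if v \<in> sphere V v0 p r then \<xi> v else 0) \<in> Usp V v0 p n r)}"

end

theory Submission
  imports Defs
begin

interpretation cs: vector_space cscale
  by unfold_locales (auto simp: cscale_def fun_eq_iff algebra_simps)

lemma cspan_eq: "cspan = cs.span" unfolding cspan_def ..
lemma cdim_eq: "cdim = cs.dim" unfolding cdim_def ..

definition Z :: "'v set \<Rightarrow> ('v \<Rightarrow> complex) set" where
  "Z A = {f. \<forall>v. v \<notin> A \<longrightarrow> f v = 0}"

definition ip :: "'v set \<Rightarrow> ('v \<Rightarrow> complex) \<Rightarrow> ('v \<Rightarrow> complex) \<Rightarrow> complex" where
  "ip A f g = (\<Sum>v\<in>A. f v * cnj (g v))"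

lemma sum_fun_apply: "(sum f S) v = (\<Sum>x\<in>S. f x v)"
  by (induction S rule: infinite_finite_induct) auto

lemma cscale_apply: "cscale c f v = c * f v" by (simp add: cscale_def)

lemma subspace_Z: "cs.subspace (Z A)"
  unfolding cs.subspace_def Z_def by (auto simp: cscale_apply)

lemma span_Z: "S \<subseteq> Z A \<Longrightarrow> cs.span S \<subseteq> Z A"
  using cs.span_minimal subspace_Z by blast

definition delta :: "'v \<Rightarrow> ('v \<Rightarrow> complex)" where
  "delta a = (\<lambda>v. if v = a then 1 else 0)"

lemma Z_span_delta:
  assumes "finite A"
  shows "Z A \<subseteq> cs.span (delta ` A)"
proof
  fix f assume f: "f \<in> Z A"
  have "f = (\<Sum>a\<in>A. cscale (f a) (delta a))"
    using f assms by (auto simp: fun_eq_iff sum_fun_apply delta_def Z_def if_distrib cscale_apply cong: if_cong)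
  also have "\<dots> \<in> cs.span (delta ` A)"
    by (intro cs.span_sum cs.span_scale cs.span_base) auto
  finally show "f \<in> cs.span (delta ` A)" .
qed

lemma indep_delta:
  assumes "finite A"
  shows "cs.independent (delta ` A)"
proof (rule cs.independent_if_scalars_zero)
  show "finite (delta ` A)" using assms by simp
next
  fix g x assume s: "(\<Sum>x\<in>delta ` A. cscale (g x) x) = 0" and x: "x \<in> delta ` A"
  then obtain a where a: "a \<in> A" "x = delta a" by auto
  have inj: "inj_on delta A" by (auto simp: inj_on_def delta_def fun_eq_iff)
  have "0 = (\<Sum>x\<in>delta ` A. cscale (g x) x) a" using s by simp
  also have "\<dots> = (\<Sum>b\<in>A. g (delta b) * delta b a)"
    by (simp add: sum_fun_apply sum.reindex[OF inj] cscale_apply)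
  also have "\<dots> = (\<Sum>b\<in>A. if b = a then g (delta b) else 0)"
    by (rule sum.cong) (auto simp: delta_def)
  also have "\<dots> = g (delta a)"
    using assms a by simp
  finally show "g x = 0" using a by simp
qed

lemma dim_Z:
  assumes "finite A"
  shows "cs.dim (Z A) = card A"
proof -
  have inj: "inj_on delta A" by (auto simp: inj_on_def delta_def fun_eq_iff)
  have "delta ` A \<subseteq> Z A" by (auto simp: delta_def Z_def)
  then have "card (delta ` A) = cs.dim (Z A)"
    using cs.basis_card_eq_dim Z_span_delta[OF assms] indep_delta[OF assms] by blast
  then show ?thesis using card_image[OF inj] by simp
qed

lemma finite_indep_Z:
  assumes "finite A" "B \<subseteq> Z A" "cs.independent B"
  shows "finite B"
  using cs.independent_span_bound[of "delta ` A" B] assms Z_span_delta[OF assms(1)] by auto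

lemma ip_add1: "ip A (x + y) z = ip A x z + ip A y z"
  by (simp add: ip_def sum.distrib algebra_simps)
lemma ip_scale1: "ip A (cscale c x) z = c * ip A x z"
  by (simp add: ip_def sum_distrib_left algebra_simps cscale_apply)
lemma ip_diff1: "ip A (x - y) z = ip A x z - ip A y z"
  by (simp add: ip_def sum_subtractf algebra_simps)
lemma ip_add2: "ip A z (x + y) = ip A z x + ip A z y"
  by (simp add: ip_def sum.distrib algebra_simps)
lemma ip_scale2: "ip A z (cscale c x) = cnj c * ip A z x"
  by (simp add: ip_def sum_distrib_left algebra_simps cscale_apply)
lemma ip_zero2: "ip A z 0 = 0"
  by (simp add: ip_def)
lemma ip_zero1: "ip A 0 z = 0"
  by (simp add: ip_def)

lemma ip_self_zero:
  assumes "finite A" "x \<in> Z A" "ip A x x = 0"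
  shows "x = 0"
proof -
  have mc: "\<And>z. z * cnj z = of_real ((cmod z)\<^sup>2)"
    by (simp add: complex_mult_cnj cmod_power2)
  have "ip A x x = of_real (\<Sum>v\<in>A. (cmod (x v))\<^sup>2)"
    by (simp add: ip_def mc)
  with assms have "(\<Sum>v\<in>A. (cmod (x v))\<^sup>2) = 0" by (metis of_real_eq_0_iff)
  then have "\<forall>v\<in>A. (cmod (x v))\<^sup>2 = 0"
    using assms(1) by (subst (asm) sum_nonneg_eq_0_iff) auto
  then show ?thesis using assms(2) by (auto simp: Z_def fun_eq_iff)
qed

lemma ip_perp_span:
  assumes "\<And>b. b \<in> B \<Longrightarrow> ip A y b = 0" "z \<in> cs.span B"
  shows "ip A y z = 0"
  using assms(2)
proof (rule cs.span_induct)
  show "cs.subspace {z. ip A y z = 0}"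
    unfolding cs.subspace_def by (simp add: ip_add2 ip_scale2 ip_zero2)
qed (use assms(1) in auto)


lemma decomp:
  assumes "finite A" "finite B" "B \<subseteq> Z A" "x \<in> Z A"
  shows "\<exists>w\<in>cs.span B. \<forall>b\<in>B. ip A (x - w) b = 0"
  using assms(2,3,4)
proof (induction B arbitrary: x rule: finite_induct)
  case empty
  show ?case using cs.span_zero by auto
next
  case (insert b B0)
  have sB0: "cs.span B0 \<subseteq> Z A" using span_Z insert.prems(1) by auto
  have sub: "cs.span B0 \<subseteq> cs.span (insert b B0)" by (rule cs.span_mono) auto
  obtain w0 where w0: "w0 \<in> cs.span B0" "\<forall>c\<in>B0. ip A (x - w0) c = 0"
    using insert.IH[of x] insert.prems by blast
  obtain w1 where w1: "w1 \<in> cs.span B0" "\<forall>c\<in>B0. ip A (b - w1) c = 0"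
    using insert.IH[of b] insert.prems by blast
  define r0 where "r0 = x - w0"
  define b2 where "b2 = b - w1"
  have r0w1: "ip A r0 w1 = 0" using ip_perp_span[of B0 A r0 w1] w0 w1 r0_def by auto
  have b2Z: "b2 \<in> Z A" unfolding b2_def
    using insert.prems(1) w1(1) sB0 cs.subspace_diff[OF subspace_Z] by auto
  have b2sp: "b2 \<in> cs.span (insert b B0)" unfolding b2_def
  proof (rule cs.span_diff)
    show "b \<in> cs.span (insert b B0)" by (rule cs.span_base) simp
    show "w1 \<in> cs.span (insert b B0)" using w1(1) sub by blast
  qed
  show ?case
  proof (cases "ip A b2 b2 = 0")
    case True
    then have "b2 = 0" using ip_self_zero[OF assms(1) b2Z] by simp
    then have "b = w1" using b2_def by simp
    have "w0 \<in> cs.span (insert b B0)" using w0(1) sub by blast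
    moreover have "\<forall>c\<in>insert b B0. ip A (x - w0) c = 0"
      using w0(2) r0w1 \<open>b = w1\<close> unfolding r0_def by blast
    ultimately show ?thesis by blast
  next
    case False
    define c where "c = ip A r0 b2 / ip A b2 b2"
    define w where "w = w0 + cscale c b2"
    have wsp: "w \<in> cs.span (insert b B0)" unfolding w_def
      using w0(1) sub b2sp by (auto intro!: cs.span_add cs.span_scale)
    have xw: "x - w = r0 - cscale c b2" unfolding w_def r0_def by simp
    have pB0: "\<forall>c'\<in>B0. ip A (x - w) c' = 0"
      using w0(2) w1(2) unfolding xw r0_def b2_def by (auto simp: ip_diff1 ip_scale1)
    have "ip A (x - w) w1 = 0" using ip_perp_span[of B0 A "x - w" w1] pB0 w1(1) by auto
    moreover have "ip A (x - w) b2 = 0" unfolding xw c_def using False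
      by (simp add: ip_diff1 ip_scale1)
    moreover have "b = w1 + b2" using b2_def by simp
    ultimately have "ip A (x - w) b = 0" by (simp add: ip_add2)
    then have "\<forall>c\<in>insert b B0. ip A (x - w) c = 0" using pB0 by blast
    then show ?thesis using wsp by blast
  qed
qed

lemma indep_union:
  assumes "finite B'" "cs.independent B" "cs.independent B'" "cs.span B \<inter> cs.span B' \<subseteq> {0}"
  shows "cs.independent (B \<union> B')"
  using assms(1,3,4)
proof (induction B' rule: finite_induct)
  case empty then show ?case using assms(2) by simp
next
  case (insert b B0)
  have i0: "cs.independent B0" "b \<notin> cs.span B0"
    using insert.prems(1) insert.hyps(2) by (auto simp: cs.independent_insert)
  have sub: "cs.span B0 \<subseteq> cs.span (insert b B0)" by (rule cs.span_mono) auto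
  have "cs.span B \<inter> cs.span B0 \<subseteq> {0}" using insert.prems(2) sub by blast
  with insert.IH i0 have iu: "cs.independent (B \<union> B0)" by blast
  have "b \<notin> cs.span (B \<union> B0)"
  proof
    assume "b \<in> cs.span (B \<union> B0)"
    then obtain x y where xy: "b = x + y" "x \<in> cs.span B" "y \<in> cs.span B0"
      by (auto simp: cs.span_Un)
    have "x = b - y" using xy by simp
    moreover have "b - y \<in> cs.span (insert b B0)"
      using xy(3) sub by (auto intro: cs.span_diff cs.span_base)
    ultimately have "x \<in> cs.span (insert b B0)" by simp
    then have "x = 0" using insert.prems(2) xy(2) by blast
    then show False using xy i0 by simp
  qed
  then have "cs.independent (insert b (B \<union> B0))" using iu cs.independent_insertI by blast
  then show ?case by simp
qed

lemma dim_union: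
  assumes "finite A" "S \<subseteq> Z A" "T \<subseteq> Z A" "cs.span S \<inter> cs.span T \<subseteq> {0}"
  shows "cs.dim (S \<union> T) = cs.dim S + cs.dim T"
proof -
  obtain B where B: "B \<subseteq> S" "cs.independent B" "S \<subseteq> cs.span B" "card B = cs.dim S"
    by (rule cs.basis_exists)
  obtain B' where B': "B' \<subseteq> T" "cs.independent B'" "T \<subseteq> cs.span B'" "card B' = cs.dim T"
    by (rule cs.basis_exists)
  have fB: "finite B" "finite B'"
    using finite_indep_Z[OF assms(1)] assms(2,3) B B' by blast+
  have sp: "cs.span B \<inter> cs.span B' \<subseteq> {0}"
    using assms(4) cs.span_mono[OF B(1)] cs.span_mono[OF B'(1)] by blast
  then have ind: "cs.independent (B \<union> B')" using indep_union fB B B' by blast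
  have disj: "B \<inter> B' = {}"
  proof -
    have "B \<inter> B' \<subseteq> {0}" using sp cs.span_base by blast
    moreover have "0 \<notin> B" using B(2) cs.dependent_zero by blast
    ultimately show ?thesis by blast
  qed
  have "card (B \<union> B') = cs.dim (S \<union> T)"
    apply (rule cs.basis_card_eq_dim)
    using B B' ind cs.span_mono[of B "B \<union> B'"] cs.span_mono[of B' "B \<union> B'"] by auto
  then show ?thesis using card_Un_disjoint[OF fB disj] B(4) B'(4) by simp
qed

lemma dim_image_inj:
  assumes lf: "Vector_Spaces.linear cscale cscale f" and inj: "inj_on f (cs.span S)"
  shows "cs.dim (f ` S) = cs.dim S"
proof -
  interpret lf: Vector_Spaces.linear cscale cscale f by (rule lf)
  obtain B where B: "B \<subseteq> S" "cs.independent B" "S \<subseteq> cs.span B" "card B = cs.dim S"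
    by (rule cs.basis_exists)
  have injB: "inj_on f (cs.span B)" using inj cs.span_mono[OF B(1)] inj_on_subset by blast
  have "cs.independent (f ` B)" using lf.independent_injective_image[OF B(2) injB] .
  moreover have "f ` S \<subseteq> cs.span (f ` B)" using lf.spans_image[OF B(3)] .
  moreover have "f ` B \<subseteq> f ` S" using B(1) by blast
  ultimately have "card (f ` B) = cs.dim (f ` S)" using cs.basis_card_eq_dim by blast
  moreover have "inj_on f B" using injB cs.span_superset inj_on_subset by blast
  ultimately show ?thesis using B(4) card_image by metis
qed

lemma G:
  assumes A: "finite A" and X: "X \<subseteq> Z A"
  defines "U \<equiv> {\<xi> \<in> Z A. \<forall>\<eta>\<in>cs.span X. ip A \<xi> \<eta> = 0}"
  shows "cs.span (X \<union> U) = Z A" "cs.dim U + cs.dim X = card A"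
proof -
  have sX: "cs.span X \<subseteq> Z A" using span_Z X .
  have UZ: "U \<subseteq> Z A" by (auto simp: U_def)
  have subU: "cs.subspace U"
    using subspace_Z[of A] unfolding cs.subspace_def U_def
    by (auto simp: ip_add1 ip_scale1 ip_zero1)
  obtain B where B: "B \<subseteq> cs.span X" "cs.independent B" "cs.span X \<subseteq> cs.span B"
    "card B = cs.dim (cs.span X)"
    by (rule cs.basis_exists)
  have fB: "finite B" using finite_indep_Z[OF A _ B(2)] B(1) sX by blast
  have spB: "cs.span B = cs.span X" using B(1,3)
    by (metis cs.span_mono cs.span_span subset_antisym)
  have "Z A \<subseteq> cs.span (X \<union> U)"
  proof
    fix x assume x: "x \<in> Z A"
    obtain w where w: "w \<in> cs.span B" "\<forall>b\<in>B. ip A (x - w) b = 0"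
      using decomp[OF A fB _ x] B(1) sX by blast
    have wX: "w \<in> cs.span X" using w spB by simp
    have "x - w \<in> Z A" using x wX sX cs.subspace_diff[OF subspace_Z] by blast
    moreover have "\<forall>\<eta>\<in>cs.span X. ip A (x - w) \<eta> = 0"
      using ip_perp_span[of B A "x-w"] w(2) spB by auto
    ultimately have xwU: "x - w \<in> U" unfolding U_def by blast
    have "x = w + (x - w)" by simp
    also have "\<dots> \<in> cs.span (X \<union> U)"
      using wX cs.span_mono[of X "X \<union> U"] xwU cs.span_base[of "x - w" "X \<union> U"]
      by (intro cs.span_add) auto
    finally show "x \<in> cs.span (X \<union> U)" .
  qed
  moreover have "cs.span (X \<union> U) \<subseteq> Z A" using span_Z X UZ by (metis Un_subset_iff)
  ultimately show sp: "cs.span (X \<union> U) = Z A" by blast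
  have "cs.span X \<inter> cs.span U \<subseteq> {0}"
  proof
    fix y assume y: "y \<in> cs.span X \<inter> cs.span U"
    have "cs.span U = U" using subU by simp
    then have yU: "y \<in> U" using y by blast
    then have "ip A y y = 0" using y U_def by auto
    then show "y \<in> {0}" using ip_self_zero A UZ yU by auto
  qed
  then have "cs.dim (X \<union> U) = cs.dim X + cs.dim U" using dim_union A X UZ by blast
  moreover have "cs.dim (X \<union> U) = card A" using sp dim_Z[OF A] cs.dim_span by metis
  ultimately show "cs.dim U + cs.dim X = card A" by simp
qed


lemma l2_fin: "finite A \<Longrightarrow> l2 A = Z A"
  by (auto simp: l2_def Z_def)

lemma l2inner_fin:
  assumes "finite A" "f \<in> Z A" "g \<in> Z A"
  shows "l2inner f g = ip A f g"
proof -
  have "l2inner f g = infsum (\<lambda>v. f v * cnj (g v)) A"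
    unfolding l2inner_def by (rule infsum_cong_neutral) (use assms in \<open>auto simp: Z_def\<close>)
  then show ?thesis using assms(1) by (simp add: ip_def)
qed

lemma Z_l2:
  assumes "finite A" "A \<subseteq> B" "f \<in> Z A"
  shows "f \<in> l2 B"
proof -
  have "(\<lambda>v. (cmod (f v))\<^sup>2) summable_on B \<longleftrightarrow> (\<lambda>v. (cmod (f v))\<^sup>2) summable_on A"
    by (rule summable_on_cong_neutral) (use assms in \<open>auto simp: Z_def\<close>)
  then show ?thesis using assms by (auto simp: l2_def Z_def)
qed

lemma lin_cs_id: "Vector_Spaces.linear cscale cscale (\<lambda>x. x)"
  using cs.module_hom_ident .

locale stree =
  fixes V :: "'v set" and v0 :: 'v and p :: "'v \<Rightarrow> 'v" and d :: "nat \<Rightarrow> nat"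
  assumes tree: "sph_sym_tree V v0 p d" and deg: "\<forall>r. d r \<ge> 2"
begin

abbreviation "Sph n \<equiv> sphere V v0 p n"
abbreviation "H \<equiv> Hop V v0 p"
abbreviation "dep \<equiv> depth v0 p"
abbreviation "ch \<equiv> children V v0 p"

lemma v0V: "v0 \<in> V" and pV: "v \<in> V \<Longrightarrow> v \<noteq> v0 \<Longrightarrow> p v \<in> V"
  and reach: "v \<in> V \<Longrightarrow> \<exists>n. (p^^n) v = v0"
  and chfin: "v \<in> V \<Longrightarrow> finite (ch v)" and chcard: "v \<in> V \<Longrightarrow> card (ch v) = d (dep v)"
  using tree unfolding sph_sym_tree_def by auto

lemma depth_v0: "dep v0 = 0"
  unfolding depth_def by simp

lemma depth_reach: "\<exists>n. (p^^n) v = v0 \<Longrightarrow> (p ^^ dep v) v = v0"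
  unfolding depth_def by (rule LeastI_ex)

lemma depth_parent:
  assumes "v \<noteq> v0" "\<exists>n. (p^^n) v = v0"
  shows "dep (p v) + 1 = dep v"
proof -
  have hv: "(p^^dep v) v = v0" using depth_reach assms(2) by blast
  have n0: "dep v \<noteq> 0"
  proof
    assume "dep v = 0"
    then show False using hv assms(1) by simp
  qed
  obtain m where m: "dep v = Suc m" using n0 not0_implies_Suc by blast
  have "(p^^m) (p v) = (p^^(Suc m)) v" by (simp only: funpow_Suc_right comp_apply)
  also have "\<dots> = v0" using hv unfolding m .
  finally have e: "(p^^(dep v - 1)) (p v) = v0" unfolding m by simp
  have le: "dep (p v) \<le> dep v - 1" using e unfolding depth_def by (rule Least_le)
  have "(p^^dep (p v)) (p v) = v0" using e depth_reach by blast
  then have "(p^^(Suc (dep (p v)))) v = v0" by (simp only: funpow_Suc_right comp_apply)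
  then have "dep v \<le> Suc (dep (p v))" unfolding depth_def by (rule Least_le)
  with le n0 show ?thesis by simp
qed

lemma sph0: "Sph 0 = {v0}"
proof -
  have "v = v0" if "v \<in> V" "dep v = 0" for v
    using depth_reach[OF reach[OF that(1)]] that(2) by simp
  then show ?thesis using v0V depth_v0 by (auto simp: sphere_def)
qed

lemma sph_Suc: "Sph (Suc n) = (\<Union>u\<in>Sph n. ch u)"
proof
  show "Sph (Suc n) \<subseteq> (\<Union>u\<in>Sph n. ch u)"
  proof
    fix w assume w: "w \<in> Sph (Suc n)"
    then have wV: "w \<in> V" and dw: "dep w = Suc n" by (auto simp: sphere_def)
    have wv0: "w \<noteq> v0" using dw depth_v0 by auto
    have "dep (p w) = n" using depth_parent[OF wv0 reach[OF wV]] dw by simp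
    then have "p w \<in> Sph n" using pV[OF wV wv0] by (simp add: sphere_def)
    moreover have "w \<in> ch (p w)" using wV wv0 by (simp add: children_def)
    ultimately show "w \<in> (\<Union>u\<in>Sph n. ch u)" by blast
  qed
next
  show "(\<Union>u\<in>Sph n. ch u) \<subseteq> Sph (Suc n)"
  proof
    fix w assume "w \<in> (\<Union>u\<in>Sph n. ch u)"
    then obtain u where u: "u \<in> Sph n" "w \<in> ch u" by blast
    then have wV: "w \<in> V" "w \<noteq> v0" "p w = u" by (auto simp: children_def)
    have "dep w = dep u + 1" using depth_parent[OF wV(2) reach[OF wV(1)]] wV(3) by simp
    then show "w \<in> Sph (Suc n)" using u wV by (simp add: sphere_def)
  qed
qed

lemma sph_card: "finite (Sph n) \<and> card (Sph n) = (\<Prod>q<n. d q)"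
proof (induction n)
  case 0
  then show ?case by (simp add: sph0)
next
  case (Suc n)
  have fin: "\<forall>u\<in>Sph n. finite (ch u)" using chfin by (auto simp: sphere_def)
  have disj: "\<forall>u\<in>Sph n. \<forall>u'\<in>Sph n. u \<noteq> u' \<longrightarrow> ch u \<inter> ch u' = {}"
    by (auto simp: children_def)
  have "card (Sph (Suc n)) = (\<Sum>u\<in>Sph n. card (ch u))"
    unfolding sph_Suc using card_UN_disjoint[of "Sph n" ch] Suc.IH fin disj by blast
  also have "\<dots> = (\<Sum>u\<in>Sph n. d n)"
    by (rule sum.cong) (auto simp: chcard sphere_def)
  also have "\<dots> = card (Sph n) * d n" by simp
  finally have "card (Sph (Suc n)) = (\<Prod>q<Suc n. d q)" using Suc.IH by simp
  moreover have "finite (Sph (Suc n))" unfolding sph_Suc using Suc.IH fin by blast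
  ultimately show ?case by blast
qed

lemma sph_fin: "finite (Sph n)" using sph_card by blast

lemma ch_ne: "u \<in> V \<Longrightarrow> ch u \<noteq> {}"
proof
  assume u: "u \<in> V" and e: "ch u = {}"
  have "card (ch u) \<ge> 2" using chcard[OF u] deg by simp
  then show False using e by simp
qed

lemma lin_H: "Vector_Spaces.linear cscale cscale H"
proof -
  have "\<forall>x y. H (x + y) = H x + H y" by (simp add: Hop_def fun_eq_iff)
  moreover have "\<forall>c x. H (cscale c x) = cscale c (H x)" by (simp add: Hop_def fun_eq_iff cscale_def)
  ultimately show ?thesis unfolding Vector_Spaces.linear_iff using cs.vector_space_axioms by blast
qed

lemma lin_Hpow: "Vector_Spaces.linear cscale cscale (H ^^ j)"
proof (induction j)
  case 0
  then show ?case using lin_cs_id by (simp add: id_def)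
next
  case (Suc j)
  show ?case unfolding funpow.simps(2) by (rule Vector_Spaces.linear_compose[OF Suc lin_H])
qed

lemma Hpow0: "(H ^^ j) 0 = 0"
  by (induction j) (auto simp: Hop_def fun_eq_iff)

lemma H_Z: "\<xi> \<in> Z (Sph n) \<Longrightarrow> H \<xi> \<in> Z (Sph (Suc n))"
proof -
  assume xi: "\<xi> \<in> Z (Sph n)"
  have "\<forall>v. v \<notin> Sph (Suc n) \<longrightarrow> H \<xi> v = 0"
  proof (intro allI impI)
    fix v assume v: "v \<notin> Sph (Suc n)"
    show "H \<xi> v = 0"
    proof (rule ccontr)
      assume ne: "H \<xi> v \<noteq> 0"
      then have vV: "v \<in> V" "v \<noteq> v0" and "\<xi> (p v) \<noteq> 0" by (auto simp: Hop_def split: if_splits)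
      then have "p v \<in> Sph n" using xi by (auto simp: Z_def)
      then have "dep (p v) = n" by (simp add: sphere_def)
      then have "dep v = Suc n" using depth_parent[OF vV(2) reach[OF vV(1)]] by simp
      then show False using v vV by (simp add: sphere_def)
    qed
  qed
  then show "H \<xi> \<in> Z (Sph (Suc n))" unfolding Z_def by blast
qed

lemma Hpow_Z: "\<xi> \<in> Z (Sph n) \<Longrightarrow> (H ^^ j) \<xi> \<in> Z (Sph (n + j))"
proof (induction j)
  case 0
  then show ?case by simp
next
  case (Suc j)
  have "H ((H ^^ j) \<xi>) \<in> Z (Sph (Suc (n + j)))" by (rule H_Z[OF Suc.IH[OF Suc.prems]])
  then show ?case by simp
qed

lemma H_inj: "inj_on H (Z (Sph n))"
proof (rule inj_onI)
  fix x y assume x: "x \<in> Z (Sph n)" and y: "y \<in> Z (Sph n)" and e: "H x = H y"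
  show "x = y"
  proof
    fix v
    show "x v = y v"
    proof (cases "v \<in> Sph n")
      case True
      then have vV: "v \<in> V" by (simp add: sphere_def)
      obtain w where w: "w \<in> ch v" using ch_ne[OF vV] by blast
      then have "w \<in> V" "w \<noteq> v0" "p w = v" by (auto simp: children_def)
      then show ?thesis using fun_cong[OF e, of w] by (simp add: Hop_def)
    next
      case False
      then show ?thesis using x y by (simp add: Z_def)
    qed
  qed
qed

lemma Hpow_inj: "inj_on (H ^^ j) (Z (Sph n))"
proof (induction j)
  case 0
  then show ?case by simp
next
  case (Suc j)
  have "(H ^^ j) ` Z (Sph n) \<subseteq> Z (Sph (n + j))" using Hpow_Z by blast
  then have "inj_on H ((H ^^ j) ` Z (Sph n))" using H_inj inj_on_subset by blast
  then show ?case unfolding funpow.simps(2) by (rule comp_inj_on[OF Suc.IH])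
qed


declare Udiag.simps[simp del]

definition Xs :: "nat \<Rightarrow> ('v \<Rightarrow> complex) set" where
  "Xs n = (\<Union>k\<in>{..<n}. (H ^^ (n - k)) ` Udiag V v0 p k)"

lemma Udiag_unf: "Udiag V v0 p n = {\<xi> \<in> l2 (Sph n). \<forall>\<eta>\<in>cspan (Xs n). l2inner \<xi> \<eta> = 0}"
  unfolding Xs_def by (rule Udiag.simps)

lemma Udiag_Z: "Udiag V v0 p n \<subseteq> Z (Sph n)"
  by (subst Udiag_unf) (auto simp: l2_fin[OF sph_fin])

lemma Xs_Z: "Xs n \<subseteq> Z (Sph n)"
proof -
  { fix k \<xi> assume k: "k < n" and xi: "\<xi> \<in> Udiag V v0 p k"
    then have "(H^^(n-k)) \<xi> \<in> Z (Sph (k + (n - k)))" using Hpow_Z Udiag_Z by blast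
    then have "(H^^(n-k)) \<xi> \<in> Z (Sph n)" using k by simp }
  then show ?thesis unfolding Xs_def by blast
qed

lemma Udiag_eq2: "Udiag V v0 p n = {\<xi> \<in> Z (Sph n). \<forall>\<eta>\<in>cs.span (Xs n). ip (Sph n) \<xi> \<eta> = 0}"
proof -
  have sp: "cs.span (Xs n) \<subseteq> Z (Sph n)" using span_Z Xs_Z .
  have "(\<forall>\<eta>\<in>cs.span (Xs n). l2inner \<xi> \<eta> = 0) \<longleftrightarrow> (\<forall>\<eta>\<in>cs.span (Xs n). ip (Sph n) \<xi> \<eta> = 0)"
    if "\<xi> \<in> Z (Sph n)" for \<xi>
  proof -
    have "\<forall>\<eta>\<in>cs.span (Xs n). l2inner \<xi> \<eta> = ip (Sph n) \<xi> \<eta>"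
      using l2inner_fin[OF sph_fin that] sp by blast
    then show ?thesis by simp
  qed
  then show ?thesis
    by (subst Udiag_unf) (auto simp: l2_fin[OF sph_fin] cspan_eq)
qed

lemma UG1: "cs.span (Xs n \<union> Udiag V v0 p n) = Z (Sph n)"
proof -
  have "cs.span (Xs n \<union> {\<xi> \<in> Z (Sph n). \<forall>\<eta>\<in>cs.span (Xs n). ip (Sph n) \<xi> \<eta> = 0}) = Z (Sph n)"
    by (rule G(1)[OF sph_fin Xs_Z])
  then show ?thesis by (simp only: Udiag_eq2[symmetric])
qed

lemma UG2: "cs.dim (Udiag V v0 p n) + cs.dim (Xs n) = card (Sph n)"
proof -
  have "cs.dim {\<xi> \<in> Z (Sph n). \<forall>\<eta>\<in>cs.span (Xs n). ip (Sph n) \<xi> \<eta> = 0} + cs.dim (Xs n) = card (Sph n)"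
    by (rule G(2)[OF sph_fin Xs_Z])
  then show ?thesis by (simp only: Udiag_eq2[symmetric])
qed

lemma Xs_Suc: "Xs (Suc n) = H ` (Xs n \<union> Udiag V v0 p n)"
proof -
  have hp: "\<And>k. k < n \<Longrightarrow> H ^^ (Suc n - k) = H \<circ> H ^^ (n - k)" by (simp add: Suc_diff_le)
  have "Xs (Suc n) = (H ^^ (Suc n - n)) ` Udiag V v0 p n \<union> (\<Union>k\<in>{..<n}. (H ^^ (Suc n - k)) ` Udiag V v0 p k)"
    unfolding Xs_def lessThan_Suc by simp
  also have "(\<Union>k\<in>{..<n}. (H ^^ (Suc n - k)) ` Udiag V v0 p k) = (\<Union>k\<in>{..<n}. H ` (H ^^ (n - k)) ` Udiag V v0 p k)"
    by (rule SUP_cong) (simp_all add: hp image_comp)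
  also have "(H ^^ (Suc n - n)) = H" by simp
  finally show ?thesis unfolding Xs_def by blast
qed

lemma dim_Xs0: "cs.dim (Xs 0) = 0"
proof -
  have "Xs 0 = {}" by (simp add: Xs_def)
  then show ?thesis using cs.dim_eq_card_independent[OF cs.independent_empty] by simp
qed

lemma dim_XsSuc: "cs.dim (Xs (Suc n)) = card (Sph n)"
proof -
  have "inj_on H (cs.span (Xs n \<union> Udiag V v0 p n))" using UG1 H_inj by simp
  then have "cs.dim (Xs (Suc n)) = cs.dim (Xs n \<union> Udiag V v0 p n)"
    unfolding Xs_Suc by (rule dim_image_inj[OF lin_H])
  also have "\<dots> = cs.dim (Z (Sph n))" using UG1 cs.dim_span by metis
  also have "\<dots> = card (Sph n)" by (rule dim_Z[OF sph_fin])
  finally show ?thesis .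
qed

lemma dim_U0: "cs.dim (Udiag V v0 p 0) = 1"
  using UG2[of 0] dim_Xs0 sph0 by simp

lemma dim_USuc: "cs.dim (Udiag V v0 p (Suc n)) = card (Sph (Suc n)) - card (Sph n)"
  using UG2[of "Suc n"] dim_XsSuc[of n] by simp

lemma dim_Usp: "cs.dim (Usp V v0 p n r) = cs.dim (Udiag V v0 p n)"
  unfolding Usp_def
  apply (rule dim_image_inj[OF lin_Hpow])
  using Hpow_inj inj_on_subset span_Z[OF Udiag_Z] by blast

lemma P_pos: "(\<Prod>q<n. d q) > 0"
proof (rule prod_pos)
  fix q show "0 < d q" using deg[rule_format, of q] by linarith
qed

lemma dim_U_pos: "cs.dim (Udiag V v0 p n) \<ge> 1"
proof (cases n)
  case 0
  then show ?thesis using dim_U0 by simp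
next
  case (Suc m)
  have c: "card (Sph (Suc m)) = card (Sph m) * d m" using sph_card[of "Suc m"] sph_card[of m] by simp
  have h: "card (Sph m) * 2 \<le> card (Sph m) * d m" using deg by (intro mult_le_mono2) simp
  moreover have "card (Sph m) \<ge> 1"
  proof -
    have pp: "0 < (\<Prod>q<m. d q)" by (rule P_pos)
    then show ?thesis using sph_card[of m] by linarith
  qed
  ultimately show ?thesis using dim_USuc[of m] c unfolding Suc by linarith
qed

lemma Usp_Z: "n \<le> r \<Longrightarrow> Usp V v0 p n r \<subseteq> Z (Sph r)"
proof
  fix \<xi> assume nr: "n \<le> r" and "\<xi> \<in> Usp V v0 p n r"
  then obtain \<zeta> where z: "\<zeta> \<in> Udiag V v0 p n" "\<xi> = (H ^^ (r - n)) \<zeta>" by (auto simp: Usp_def)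
  then have "\<xi> \<in> Z (Sph (n + (r - n)))" using Hpow_Z Udiag_Z by blast
  then show "\<xi> \<in> Z (Sph r)" using nr by simp
qed

lemma zero_Usp: "0 \<in> Usp V v0 p n r"
proof -
  have "0 \<in> Udiag V v0 p n" by (subst Udiag_eq2) (auto simp: ip_zero1 Z_def)
  then have "(H ^^ (r - n)) 0 \<in> Usp V v0 p n r" unfolding Usp_def by blast
  then show ?thesis using Hpow0 by simp
qed

lemma Usp_Vsp:
  assumes nr: "n \<le> r"
  shows "Usp V v0 p n r \<subseteq> Vsp V v0 p n"
proof
  fix \<xi> assume xi: "\<xi> \<in> Usp V v0 p n r"
  have Zr: "\<xi> \<in> Z (Sph r)" using Usp_Z nr xi by blast
  have "\<xi> \<in> l2 V" by (rule Z_l2[OF sph_fin _ Zr]) (auto simp: sphere_def)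
  moreover have "\<forall>r'<n. \<forall>v\<in>Sph r'. \<xi> v = 0" using Zr nr by (auto simp: Z_def sphere_def)
  moreover have "\<forall>r'\<ge>n. (\<lambda>v. if v \<in> Sph r' then \<xi> v else 0) \<in> Usp V v0 p n r'"
  proof (intro allI impI)
    fix r' assume "n \<le> r'"
    show "(\<lambda>v. if v \<in> Sph r' then \<xi> v else 0) \<in> Usp V v0 p n r'"
    proof (cases "r' = r")
      case True
      have "(\<lambda>v. if v \<in> Sph r' then \<xi> v else 0) = \<xi>" using Zr True by (auto simp: Z_def fun_eq_iff)
      then show ?thesis using xi True by simp
    next
      case False
      have "(\<lambda>v. if v \<in> Sph r' then \<xi> v else 0) = 0"
        using Zr False by (auto simp: Z_def fun_eq_iff sphere_def)
      then show ?thesis using zero_Usp by simp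
    qed
  qed
  ultimately show "\<xi> \<in> Vsp V v0 p n" unfolding Vsp_def by blast
qed

lemma Usp_nonzero: "n \<le> r \<Longrightarrow> \<exists>e\<in>Usp V v0 p n r. e \<noteq> 0"
proof (rule ccontr)
  assume "\<not> (\<exists>e\<in>Usp V v0 p n r. e \<noteq> 0)"
  then have "Usp V v0 p n r \<subseteq> cs.span {}" by auto
  then have "cs.dim (Usp V v0 p n r) \<le> card {}" using cs.dim_le_card[of "Usp V v0 p n r" "{}"] by simp
  then show False using dim_Usp[of n r] dim_U_pos[of n] by simp
qed

lemma Vsp_inf: "\<not> (\<exists>B. finite B \<and> Vsp V v0 p n \<subseteq> cspan B)"
proof
  assume "\<exists>B. finite B \<and> Vsp V v0 p n \<subseteq> cspan B"
  then obtain B where B: "finite B" "Vsp V v0 p n \<subseteq> cs.span B" by (auto simp: cspan_eq)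
  obtain e where e: "\<And>r. n \<le> r \<Longrightarrow> e r \<in> Usp V v0 p n r \<and> e r \<noteq> 0"
    using Usp_nonzero by metis
  have key: "cs.independent (e ` {n..<n+K}) \<and> card (e ` {n..<n+K}) = K" for K
  proof (induction K)
    case 0 then show ?case using cs.independent_empty by simp
  next
    case (Suc K)
    let ?E = "e ` {n..<n+K}"
    let ?Q = "{f. \<forall>v\<in>Sph (n+K). f v = 0}"
    have Q: "cs.subspace ?Q" unfolding cs.subspace_def by (simp add: cscale_apply)
    have "?E \<subseteq> ?Q"
    proof
      fix f assume "f \<in> ?E"
      then obtain r where r: "n \<le> r" "r < n+K" "f = e r" by auto
      then have "f \<in> Z (Sph r)" using e Usp_Z by blast
      then show "f \<in> ?Q" using r by (auto simp: Z_def sphere_def)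
    qed
    then have sp: "cs.span ?E \<subseteq> ?Q" using cs.span_minimal Q by blast
    have nz: "e (n+K) \<notin> ?Q"
    proof
      assume a: "e (n+K) \<in> ?Q"
      have "e (n+K) \<in> Z (Sph (n+K))" using e[of "n+K"] Usp_Z[of n "n+K"] by auto
      then have "e (n+K) = 0" using a by (auto simp: Z_def fun_eq_iff)
      then show False using e[of "n+K"] by simp
    qed
    have nsp: "e (n+K) \<notin> cs.span ?E" using sp nz by blast
    have nin: "e (n+K) \<notin> ?E" using nsp cs.span_base by blast
    have eq: "e ` {n..<n + Suc K} = insert (e (n+K)) ?E" by (simp add: atLeastLessThanSuc)
    show ?case using Suc.IH nsp nin unfolding eq
      by (simp add: cs.independent_insert card_insert_disjoint)
  qed
  have "e ` {n..<n + Suc (card B)} \<subseteq> Vsp V v0 p n" using e Usp_Vsp by fastforce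
  then have "e ` {n..<n + Suc (card B)} \<subseteq> cs.span B" using B(2) by blast
  then have "card (e ` {n..<n + Suc (card B)}) \<le> card B"
    using cs.independent_span_bound[OF B(1)] key by blast
  then show False using key[of "Suc (card B)"] by simp
qed

end

theorem proposition4p3:
  fixes V :: "'v set" and v0 :: 'v and p :: "'v \<Rightarrow> 'v" and d :: "nat \<Rightarrow> nat"
  assumes tree: "sph_sym_tree V v0 p d"
    and inf: "infinite V"
    and deg: "\<forall>r. d r \<ge> 2"
    and bdd: "\<exists>M. \<forall>r. d r \<le> M"
  shows "(\<forall>n. cdim (l2 (sphere V v0 p n)) = card (sphere V v0 p n)
              \<and> card (sphere V v0 p n) = (\<Prod>q<n. d q))
       \<and> (\<forall>n r. 2 \<le> n \<and> n \<le> r \<longrightarrow> cdim (Usp V v0 p n r) = (\<Prod>q<n - 1. d q) * (d (n - 1) - 1))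
       \<and> (\<forall>r. 1 \<le> r \<longrightarrow> cdim (Usp V v0 p 1 r) = d 0 - 1)
       \<and> (\<forall>r. cdim (Usp V v0 p 0 r) = 1)
       \<and> (\<forall>n. \<not> (\<exists>B. finite B \<and> Vsp V v0 p n \<subseteq> cspan B))"
proof -
  interpret stree V v0 p d using tree deg by unfold_locales
  have P1: "cdim (l2 (sphere V v0 p n)) = card (sphere V v0 p n)
              \<and> card (sphere V v0 p n) = (\<Prod>q<n. d q)" for n
    using dim_Z[OF sph_fin[of n]] sph_card[of n] l2_fin[OF sph_fin[of n]] by (simp add: cdim_eq)
  have P2: "cdim (Usp V v0 p n r) = (\<Prod>q<n - 1. d q) * (d (n - 1) - 1)" if "2 \<le> n" for n r
  proof -
    have "n \<noteq> 0" using that by simp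
    then obtain m where m: "n = Suc m" using not0_implies_Suc by blast
    have "cdim (Usp V v0 p n r) = card (Sph (Suc m)) - card (Sph m)"
      using dim_Usp dim_USuc m by (simp add: cdim_eq)
    also have "\<dots> = (\<Prod>q<m. d q) * d m - (\<Prod>q<m. d q)"
      using sph_card[of "Suc m"] sph_card[of m] by simp
    also have "\<dots> = (\<Prod>q<m. d q) * (d m - 1)" by (simp add: diff_mult_distrib2)
    finally show ?thesis using m by simp
  qed
  have P3: "cdim (Usp V v0 p 1 r) = d 0 - 1" for r
  proof -
    have "cdim (Usp V v0 p 1 r) = card (Sph (Suc 0)) - card (Sph 0)"
      using dim_Usp dim_USuc[of 0] by (simp add: cdim_eq)
    then show ?thesis using sph_card[of 1] sph_card[of 0] by simp
  qed
  have P4: "cdim (Usp V v0 p 0 r) = 1" for r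
    using dim_Usp dim_U0 by (simp add: cdim_eq)
  show ?thesis using P1 P2 P3 P4 Vsp_inf by blast
qed

end
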